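(* Let $N,M,m\in\mathbb{N}$ with $M\geq 3$, and let $T:\mathbb{C}^N\times\cdots\times\mathbb{C}^N\to\mathbb{C}$ be an $m$-linear form, where each copy of $\mathbb{C}^N$ carries the sup norm. Let $\|T\|=\sup\{|T(x^{(1)},\ldots,x^{(m)})|:\|x^{(i)}\|_\infty\leq 1,\ 1\le i\le m\}$ and $\|T\|_M=\sup\{|T(x^{(1)},\ldots,x^{(m)})|: x^{(1)},\ldots,x^{(m)}\in D_M^N\}$. Then $$\|T\|_M\leq \|T\|\leq r_M^{-m}\|T\|_M.$$
   Context: $T_M=\{\exp(2j\pi i/M): j=0,\ldots,M-1\}$ is the set of $M$th roots of unity, $D_M=\operatorname{conv}(T_M)\subset\mathbb{C}$, $D_M^N=D_M\times\cdots\times D_M$ ($N$ factors), and $r_M=\left(\frac12+\frac12\cos\left(\frac{2\pi}{M}\right)\right)^{1/2}$. *)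

theory Defs
  imports "HOL-Analysis.Analysis"
begin

text \<open>Vectors in C^N are functions nat => complex (only indices j < N matter);
an m-tuple of such vectors is a function nat => (nat => complex) (only i < m matter).\<close>

definition roots_of_unity :: "nat \<Rightarrow> complex set" where
  "roots_of_unity M = {cis (2 * pi * real j / real M) | j. j < M}"

definition D :: "nat \<Rightarrow> complex set" where
  "D M = convex hull (roots_of_unity M)"

definition rM :: "nat \<Rightarrow> real" where
  "rM M = sqrt (1/2 + 1/2 * cos (2 * pi / real M))"

definition multilinear_form ::
  "nat \<Rightarrow> nat \<Rightarrow> ((nat \<Rightarrow> nat \<Rightarrow> complex) \<Rightarrow> complex) \<Rightarrow> bool" where
  "multilinear_form N m T \<longleftrightarrow>
     (\<forall>x y. (\<forall>i<m. \<forall>j<N. x i j = y i j) \<longrightarrow> T x = T y) \<and>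
     (\<forall>x i u v (a::complex) b. i < m \<longrightarrow>
        T (x(i := (\<lambda>j. a * u j + b * v j))) = a * T (x(i := u)) + b * T (x(i := v)))"

definition form_norm ::
  "nat \<Rightarrow> nat \<Rightarrow> ((nat \<Rightarrow> nat \<Rightarrow> complex) \<Rightarrow> complex) \<Rightarrow> real" where
  "form_norm N m T = Sup {cmod (T x) | x. \<forall>i<m. \<forall>j<N. cmod (x i j) \<le> 1}"

definition form_normM ::
  "nat \<Rightarrow> nat \<Rightarrow> nat \<Rightarrow> ((nat \<Rightarrow> nat \<Rightarrow> complex) \<Rightarrow> complex) \<Rightarrow> real" where
  "form_normM M N m T = Sup {cmod (T x) | x. \<forall>i<m. \<forall>j<N. x i j \<in> D M}"

end

theory Submission imports Defs "HOL-Analysis.Analysis" begin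

lemma inner_cis: "inner c (cis \<phi>) = cmod c * cos (Arg c - \<phi>)"
proof (cases "c = 0")
  case True then show ?thesis by simp
next
  case False
  have "rcis (cmod c) (Arg c) = c" by (rule rcis_cmod_Arg)
  then have "Re c = cmod c * cos (Arg c)" "Im c = cmod c * sin (Arg c)"
    by (metis Re_rcis, metis Im_rcis)
  then show ?thesis
    by (simp add: inner_complex_def cos_diff algebra_simps)
qed

lemma good_root:
  assumes "M \<ge> 1"
  shows "\<exists>j<M. inner c (cis (2 * pi * real j / real M)) \<ge> cmod c * cos (pi / M)"
proof -
  define \<theta> :: real where "\<theta> = Arg c"
  define k where "k = round (\<theta> * M / (2 * pi))"
  define j where "j = nat (k mod int M)"
  define q where "q = k div int M"
  have Mpos: "real M > 0" using assms by simp
  have kj: "k = q * int M + int j" unfolding j_def q_def using assms by simp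
  have "\<bar>of_int k - \<theta> * M / (2 * pi)\<bar> \<le> 1/2"
    unfolding k_def by (rule of_int_round_abs_le)
  then have "\<bar>2 * pi * of_int k / M - \<theta>\<bar> \<le> pi / M"
  proof -
    have "2 * pi * of_int k / M - \<theta> = (2 * pi / M) * (of_int k - \<theta> * M / (2 * pi))"
      using Mpos by (simp add: field_simps)
    then have "\<bar>2 * pi * of_int k / M - \<theta>\<bar> = (2 * pi / M) * \<bar>of_int k - \<theta> * M / (2 * pi)\<bar>"
      by (simp add: abs_mult)
    also have "\<dots> \<le> (2 * pi / M) * (1/2)"
      using \<open>\<bar>of_int k - \<theta> * M / (2 * pi)\<bar> \<le> 1/2\<close> Mpos by (intro mult_left_mono) auto
    finally show ?thesis by simp
  qed
  moreover have "2 * pi * of_int k / M = 2 * pi * of_int q + 2 * pi * real j / M"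
    using Mpos by (simp add: kj field_simps)
  ultimately have "\<bar>2 * pi * of_int (- q) + (\<theta> - 2 * pi * real j / M)\<bar> \<le> pi / M"
    by (simp add: abs_minus_commute algebra_simps)
  moreover have "pi / M \<le> pi" using assms by (simp add: field_simps)
  ultimately have "cos (pi / M) \<le> cos (\<theta> - 2 * pi * real j / M)"
    by (rule cos_monotone_aux)
  moreover have "j < M" unfolding j_def using assms
    by (simp add: nat_less_iff)
  ultimately show ?thesis
    by (intro exI[of _ j]) (auto simp: inner_cis \<theta>_def intro: mult_left_mono)
qed


lemma disk_in_D:
  assumes "M \<ge> 1" "cmod z \<le> cos (pi / M)"
  shows "z \<in> D M"
proof (rule ccontr)
  assume nz: "z \<notin> D M"
  have fin: "finite (roots_of_unity M)"
    unfolding roots_of_unity_def by simp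
  have "convex (D M)" unfolding D_def by simp
  moreover have "closed (D M)" unfolding D_def
    using fin by (simp add: compact_imp_closed finite_imp_compact_convex_hull)
  ultimately obtain a b where ab: "inner a z < b" "\<forall>x\<in>D M. inner a x > b"
    using separating_hyperplane_closed_point nz by blast
  define c where "c = - a"
  obtain j where j: "j < M" "inner c (cis (2 * pi * real j / real M)) \<ge> cmod c * cos (pi / M)"
    using good_root[OF assms(1)] by blast
  have "cis (2 * pi * real j / real M) \<in> D M"
    unfolding D_def roots_of_unity_def using j(1) by (intro hull_inc) blast
  then have "inner a (cis (2 * pi * real j / real M)) > b" using ab by blast
  moreover have "inner c z \<le> cmod c * cmod z"
    using Cauchy_Schwarz_ineq2[of c z] by simp
  moreover have "cmod c * cmod z \<le> cmod c * cos (pi / M)"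
    using assms(2) by (intro mult_left_mono) auto
  ultimately show False using ab j unfolding c_def by simp
qed

lemma rM_eq:
  assumes "M \<ge> 2"
  shows "rM M = cos (pi / M)"
proof -
  have "pi / M \<le> pi / 2" using assms by (simp add: field_simps)
  moreover have "pi / M \<ge> 0" by simp
  ultimately have c0: "cos (pi / M) \<ge> 0" by (intro cos_ge_zero; linarith)
  have "cos (2 * pi / M) = cos (2 * (pi / M))" by simp
  also have "\<dots> = 2 * (cos (pi / M))\<^sup>2 - 1" by (rule cos_double_cos)
  finally have "1/2 + 1/2 * cos (2 * pi / real M) = (cos (pi / M))\<^sup>2" by (simp add: algebra_simps)
  then show ?thesis unfolding rM_def using c0 by simp
qed

lemma rM_pos:
  assumes "M \<ge> 3"
  shows "rM M > 0"
proof -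
  have "pi / M < pi / 2" using assms by (simp add: field_simps)
  moreover have "pi / M > 0" using assms by simp
  ultimately have "cos (pi / M) > 0" by (intro cos_gt_zero) auto
  then show ?thesis using rM_eq[of M] assms by simp
qed


definition ev :: "nat \<Rightarrow> nat \<Rightarrow> complex" where
  "ev j = (\<lambda>l. if l = j then 1 else 0)"

lemma ml_local:
  assumes "multilinear_form N m T" "\<And>i j. i < m \<Longrightarrow> j < N \<Longrightarrow> x i j = y i j"
  shows "T x = T y"
  using assms unfolding multilinear_form_def by blast

lemma ml_lin:
  assumes "multilinear_form N m T" "i < m"
  shows "T (x(i := (\<lambda>j. a * u j + b * v j))) = a * T (x(i := u)) + b * T (x(i := v))"
  using assms unfolding multilinear_form_def by blast

lemma ml_zero:
  assumes "multilinear_form N m T" "i < m"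
  shows "T (x(i := (\<lambda>j. 0))) = 0"
  using ml_lin[OF assms, of x 0 "\<lambda>j. 0" 0 "\<lambda>j. 0"] by simp

lemma ml_decomp_aux:
  assumes "multilinear_form N m T" "i < m"
  shows "T (x(i := (\<lambda>l. if l < n then u l else 0))) = (\<Sum>j<n. u j * T (x(i := ev j)))"
proof (induction n)
  case 0
  have "(\<lambda>l. if l < (0::nat) then u l else (0::complex)) = (\<lambda>j. 0)" by simp
  then show ?case using ml_zero[OF assms, of x] by (metis lessThan_0 sum.empty)
next
  case (Suc n)
  have "(\<lambda>l. if l < Suc n then u l else 0) = (\<lambda>l. 1 * (if l < n then u l else 0) + u n * ev n l)"
    by (auto simp: ev_def fun_eq_iff less_Suc_eq)
  then have "T (x(i := (\<lambda>l. if l < Suc n then u l else 0)))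
     = 1 * T (x(i := (\<lambda>l. if l < n then u l else 0))) + u n * T (x(i := ev n))"
    using ml_lin[OF assms] by metis
  then show ?case using Suc.IH by (simp only: sum.lessThan_Suc mult_1_left)
qed

lemma ml_decomp:
  assumes "multilinear_form N m T" "i < m"
  shows "T (x(i := u)) = (\<Sum>j<N. u j * T (x(i := ev j)))"
proof -
  have "T (x(i := u)) = T (x(i := (\<lambda>l. if l < N then u l else 0)))"
    by (rule ml_local[OF assms(1)]) auto
  then show ?thesis using ml_decomp_aux[OF assms] by simp
qed

lemma ml_bound_aux:
  assumes "multilinear_form N m T"
  defines "C \<equiv> (\<Sum>g\<in>{..<m} \<rightarrow>\<^sub>E {..<N}. cmod (T (\<lambda>i. ev (g i))))"
  shows "k \<le> m \<Longrightarrow> (\<forall>i<k. \<forall>j<N. cmod (x i j) \<le> 1) \<Longrightarrow>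
     (\<forall>i. k \<le> i \<and> i < m \<longrightarrow> g i < N \<and> x i = ev (g i)) \<Longrightarrow> cmod (T x) \<le> real N ^ k * C"
proof (induction k arbitrary: x g)
  case 0
  define g0 where "g0 = restrict g {..<m}"
  have g0: "g0 \<in> {..<m} \<rightarrow>\<^sub>E {..<N}" using 0 unfolding g0_def by auto
  have "T x = T (\<lambda>i. ev (g0 i))"
    by (rule ml_local[OF assms(1)]) (use 0 in \<open>auto simp: g0_def\<close>)
  moreover have "cmod (T (\<lambda>i. ev (g0 i))) \<le> C"
    unfolding C_def by (rule member_le_sum[OF g0]) (auto intro: finite_PiE)
  ultimately show ?case by simp
next
  case (Suc k)
  have km: "k < m" using Suc by simp
  have xk: "x = x(k := x k)" by simp
  have "T x = (\<Sum>j<N. x k j * T (x(k := ev j)))"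
    using ml_decomp[OF assms(1) km, of x "x k"] by simp
  also have "cmod \<dots> \<le> (\<Sum>j<N. cmod (x k j) * cmod (T (x(k := ev j))))"
    by (rule order_trans[OF norm_sum]) (simp add: norm_mult)
  also have "\<dots> \<le> (\<Sum>j<N. 1 * (real N ^ k * C))"
  proof (rule sum_mono)
    fix j assume j: "j \<in> {..<N}"
    have "cmod (T (x(k := ev j))) \<le> real N ^ k * C"
      by (rule Suc.IH[of _ "g(k := j)"]) (use Suc.prems j in auto)
    moreover have "cmod (x k j) \<le> 1" using Suc.prems j by auto
    ultimately show "cmod (x k j) * cmod (T (x(k := ev j))) \<le> 1 * (real N ^ k * C)"
      by (intro mult_mono) auto
  qed
  also have "\<dots> = real N ^ Suc k * C" by simp
  finally show ?case .
qed

lemma ml_bound: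
  assumes "multilinear_form N m T" "\<forall>i<m. \<forall>j<N. cmod (x i j) \<le> 1"
  shows "cmod (T x) \<le> real N ^ m * (\<Sum>g\<in>{..<m} \<rightarrow>\<^sub>E {..<N}. cmod (T (\<lambda>i. ev (g i))))"
  by (rule ml_bound_aux[OF assms(1), of m x]) (use assms(2) in auto)

lemma ml_scale_aux:
  assumes "multilinear_form N m T"
  shows "k \<le> m \<Longrightarrow> T (\<lambda>i j. if i < k then c * x i j else x i j) = c ^ k * T x"
proof (induction k)
  case 0 then show ?case by simp
next
  case (Suc k)
  define f where "f = (\<lambda>i j. if i < k then c * x i j else x i j)"
  have "(\<lambda>i j. if i < Suc k then c * x i j else x i j) = f(k := (\<lambda>j. c * f k j + 0 * f k j))"
    by (auto simp: f_def fun_eq_iff)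
  then have "T (\<lambda>i j. if i < Suc k then c * x i j else x i j) = c * T (f(k := f k)) + 0 * T (f(k := f k))"
    using ml_lin[OF assms, of k f c "f k" 0 "f k"] Suc.prems by simp
  also have "\<dots> = c * T f" by simp
  finally show ?case using Suc by (simp add: f_def)
qed

lemma ml_scale:
  assumes "multilinear_form N m T"
  shows "T (\<lambda>i j. c * x i j) = c ^ m * T x"
proof -
  have "T (\<lambda>i j. c * x i j) = T (\<lambda>i j. if i < m then c * x i j else x i j)"
    by (rule ml_local[OF assms]) auto
  then show ?thesis using ml_scale_aux[OF assms, of m c x] by simp
qed


lemma D_sub: "D M \<subseteq> cball 0 1"
  unfolding D_def roots_of_unity_def
  by (rule hull_minimal) auto

theorem mainTheorem2:
  fixes N M m :: nat
    and T :: "(nat \<Rightarrow> nat \<Rightarrow> complex) \<Rightarrow> complex"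
  assumes "M \<ge> 3"
    and "multilinear_form N m T"
  shows "form_normM M N m T \<le> form_norm N m T
         \<and> form_norm N m T \<le> (rM M) powi (- int m) * form_normM M N m T"
proof -
  define A where "A = {cmod (T x) | x. \<forall>i<m. \<forall>j<N. cmod (x i j) \<le> 1}"
  define B where "B = {cmod (T x) | x. \<forall>i<m. \<forall>j<N. x i j \<in> D M}"
  define r where "r = rM M"
  have r0: "r > 0" unfolding r_def using rM_pos[OF assms(1)] .
  have rcos: "r = cos (pi / M)" unfolding r_def using rM_eq[of M] assms(1) by simp
  have bA: "bdd_above A"
  proof (rule bdd_aboveI)
    fix a assume "a \<in> A"
    then show "a \<le> real N ^ m * (\<Sum>g\<in>{..<m} \<rightarrow>\<^sub>E {..<N}. cmod (T (\<lambda>i. ev (g i))))"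
      unfolding A_def using ml_bound[OF assms(2)] by blast
  qed
  have neA: "A \<noteq> {}" unfolding A_def by (auto intro!: exI[of _ "\<lambda>i j. 0"])
  have BA: "B \<subseteq> A" unfolding A_def B_def using D_sub by fastforce
  have "(1::complex) \<in> D M"
    unfolding D_def roots_of_unity_def
    using assms(1) by (intro hull_inc) (auto intro!: exI[of _ 0])
  then have neB: "B \<noteq> {}" unfolding B_def by auto
  have bB: "bdd_above B" by (rule bdd_above_mono[OF bA BA])
  have 1: "Sup B \<le> Sup A" by (rule cSup_subset_mono[OF neB bA BA])
  have 2: "Sup A \<le> inverse (r ^ m) * Sup B"
  proof (rule cSup_least[OF neA])
    fix a assume "a \<in> A"
    then obtain x where x: "a = cmod (T x)" "\<forall>i<m. \<forall>j<N. cmod (x i j) \<le> 1"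
      unfolding A_def by blast
    define y where "y = (\<lambda>i j. complex_of_real r * x i j)"
    have "\<forall>i<m. \<forall>j<N. y i j \<in> D M"
    proof (intro allI impI)
      fix i j assume "i < m" "j < N"
      then have "cmod (x i j) \<le> 1" using x by blast
      then have "cmod (y i j) \<le> cos (pi / M)"
        unfolding y_def using r0 rcos by (simp add: norm_mult mult_left_le)
      then show "y i j \<in> D M" using disk_in_D assms(1) by simp
    qed
    then have "cmod (T y) \<in> B" unfolding B_def by blast
    then have "cmod (T y) \<le> Sup B" using bB by (rule cSup_upper)
    moreover have "cmod (T y) = r ^ m * a"
      unfolding y_def ml_scale[OF assms(2)] x(1) using r0 by (simp add: norm_mult norm_power)
    ultimately have "r ^ m * a \<le> Sup B" by simp
    then show "a \<le> inverse (r ^ m) * Sup B"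
      using r0 by (simp add: field_simps)
  qed
  show ?thesis
    using 1 2 unfolding form_norm_def form_normM_def A_def[symmetric] B_def[symmetric] r_def
    by (simp add: power_int_minus)
qed

end
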